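(* Let $\mathcal{A}$ be a separating union-closed family with base set $[n]$ and height $h=4$, and let $\mathcal{B}=\{B_1,B_2,B_3\}$ be a choice of $\mathcal{B}(\mathcal{A})$ with $|\mathcal{B}|=3$. Suppose $|B|=n$, where $B=b(\mathcal{A}_{<n/2})$. Then for every $A \in \mathcal{A}_{<n/2} \setminus \mathcal{B}$, we have $\bigcup_{i=1}^3 \mathrm{irr}_{\mathcal{B}}(B_i) \not\subseteq A$.
   Context: A family of sets $\mathcal{A}$ is union-closed if it is a finite family of distinct finite sets with at least one nonempty member set, and $X,Y\in\mathcal{A}$ implies $X\cup Y\in\mathcal{A}$ (the empty set may be a member). For a family $\mathcal{F}$, $b(\mathcal{F})=\bigcup_{F\in\mathcal{F}}F$; the base set $b(\mathcal{A})$ is denoted $[n]=\{1,\dots,n\}$. $\mathcal{A}$ is separating if for any two distinct $x,y\in[n]$ there is $A\in\mathcal{A}$ containing exactly one of $x,y$. A chain in $\mathcal{A}$ is a subfamily any two distinct members of which are comparable under proper inclusion; the height $h$ of $\mathcal{A}$ is the maximum size of a chain in $\mathcal{A}$. For real $x\ge 0$, $\mathcal{A}_{<x}=\{A\in\mathcal{A} : |A|<x\}$. For $\mathcal{S}\subseteq\mathcal{A}$ and $S\in\mathcal{S}$, $\mathrm{irr}_{\mathcal{S}}(S)=\{s\in S : s\notin b(\mathcal{S}\setminus\{S\})\}$, and $\mathcal{S}$ is irredundant if $\mathrm{irr}_{\mathcal{S}}(S)\neq\emptyset$ for every $S\in\mathcal{S}$. With $B=b(\mathcal{A}_{<n/2})$,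 $\mathcal{B}(\mathcal{A})$ denotes any irredundant subfamily of $\mathcal{A}_{<n/2}$ of minimum size such that $b(\mathcal{B}(\mathcal{A}))=B$. *)

theory Defs
  imports Complex_Main
begin

definition union_closed :: "'a set set \<Rightarrow> bool" where
  "union_closed \<A> \<longleftrightarrow> finite \<A> \<and> (\<forall>X\<in>\<A>. finite X) \<and> (\<exists>X\<in>\<A>. X \<noteq> {})
     \<and> (\<forall>X\<in>\<A>. \<forall>Y\<in>\<A>. X \<union> Y \<in> \<A>)"

definition base :: "'a set set \<Rightarrow> 'a set" where
  "base \<F> = \<Union>\<F>"

definition separating :: "'a set set \<Rightarrow> bool" where
  "separating \<A> \<longleftrightarrow> (\<forall>x\<in>base \<A>. \<forall>y\<in>base \<A>. x \<noteq> y \<longrightarrow>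
     (\<exists>A\<in>\<A>. (x \<in> A \<and> y \<notin> A) \<or> (y \<in> A \<and> x \<notin> A)))"

definition is_chain :: "'a set set \<Rightarrow> bool" where
  "is_chain \<C> \<longleftrightarrow> (\<forall>X\<in>\<C>. \<forall>Y\<in>\<C>. X \<noteq> Y \<longrightarrow> X \<subset> Y \<or> Y \<subset> X)"

definition height :: "'a set set \<Rightarrow> nat" where
  "height \<A> = Max {card \<C> | \<C>. \<C> \<subseteq> \<A> \<and> is_chain \<C>}"

definition small_sets :: "'a set set \<Rightarrow> real \<Rightarrow> 'a set set" where
  "small_sets \<A> x = {A \<in> \<A>. real (card A) < x}"

definition irr :: "'a set set \<Rightarrow> 'a set \<Rightarrow> 'a set" where
  "irr \<S> S = {s \<in> S. s \<notin> base (\<S> - {S})}"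

definition irredundant :: "'a set set \<Rightarrow> bool" where
  "irredundant \<S> \<longleftrightarrow> (\<forall>S\<in>\<S>. irr \<S> S \<noteq> {})"

definition is_B_choice :: "'a set set \<Rightarrow> 'a set set \<Rightarrow> bool" where
  "is_B_choice \<A> \<B> \<longleftrightarrow>
     (let n = card (base \<A>); L = small_sets \<A> (real n / 2) in
       \<B> \<subseteq> L \<and> irredundant \<B> \<and> base \<B> = base L \<and>
       (\<forall>\<S>. \<S> \<subseteq> L \<and> irredundant \<S> \<and> base \<S> = base L \<longrightarrow> card \<B> \<le> card \<S>))"

end

theory Submission
  imports Defs
begin

theorem propositionG:
  fixes \<A> :: "nat set set" and n :: nat and B1 B2 B3 :: "nat set"
  assumes "union_closed \<A>"
    and "separating \<A>"
    and "base \<A> = {1..n}"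
    and "height \<A> = 4"
    and "is_B_choice \<A> {B1, B2, B3}"
    and "card {B1, B2, B3} = 3"
    and "card (base (small_sets \<A> (real n / 2))) = n"
  shows "\<forall>A \<in> small_sets \<A> (real n / 2) - {B1, B2, B3}.
           \<not> (irr {B1, B2, B3} B1 \<union> irr {B1, B2, B3} B2 \<union> irr {B1, B2, B3} B3 \<subseteq> A)"
proof (intro ballI notI)
  fix A assume Am: "A \<in> small_sets \<A> (real n / 2) - {B1, B2, B3}"
    and sub: "irr {B1, B2, B3} B1 \<union> irr {B1, B2, B3} B2 \<union> irr {B1, B2, B3} B3 \<subseteq> A"
  define L where "L = small_sets \<A> (real n / 2)"
  have cn: "card (base \<A>) = n" using assms(3) by simp
  have BL: "{B1,B2,B3} \<subseteq> L" and bB: "base {B1,B2,B3} = base L"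
    using assms(5) cn unfolding is_B_choice_def L_def Let_def by auto
  have Lsub: "base L \<subseteq> {1..n}" using assms(3) unfolding L_def small_sets_def base_def by auto
  have "card (base L) = n" using assms(7) L_def by simp
  hence bL: "base L = {1..n}" using Lsub by (simp add: card_subset_eq)
  define U where "U = B1 \<union> B2 \<union> B3"
  have U: "U = {1..n}" using bB bL unfolding U_def base_def by auto
  have "finite U" using U by simp
  hence fin: "finite B1" "finite B2" "finite B3" unfolding U_def by auto
  have sz: "2 * card X < n" if "X \<in> L" for X
    using that unfolding L_def small_sets_def by auto
  have s1: "2 * card B1 < n" "2 * card B2 < n" "2 * card B3 < n" using BL sz by auto
  have sA: "2 * card A < n" using Am sz L_def by auto
  have dist: "B1 \<noteq> B2" "B1 \<noteq> B3" "B2 \<noteq> B3"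
  proof -
    have c2: "card {x,y} \<le> 2" for x y :: "nat set" by (simp add: card_insert_if)
    show "B1 \<noteq> B2" proof assume "B1 = B2" thus False using assms(6) c2[of B2 B3] by simp qed
    show "B1 \<noteq> B3" proof assume "B1 = B3" thus False using assms(6) c2[of B2 B3] by (simp add: insert_commute) qed
    show "B2 \<noteq> B3" proof assume "B2 = B3" thus False using assms(6) c2[of B1 B3] by simp qed
  qed
  define D where "D = (B1 \<inter> B2) \<union> ((B1 \<union> B2) \<inter> B3)"
  have I: "irr {B1, B2, B3} B1 \<union> irr {B1, B2, B3} B2 \<union> irr {B1, B2, B3} B3 = U - D"
    using dist unfolding irr_def base_def U_def D_def by auto
  have e1: "card B1 + card B2 = card (B1 \<union> B2) + card (B1 \<inter> B2)"
    using fin by (intro card_Un_Int) auto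
  have e2: "card (B1 \<union> B2) + card B3 = card U + card ((B1 \<union> B2) \<inter> B3)"
    using fin unfolding U_def by (intro card_Un_Int) auto
  have dD: "card D \<le> card (B1 \<inter> B2) + card ((B1 \<union> B2) \<inter> B3)"
    unfolding D_def by (rule card_Un_le)
  have DU: "D \<subseteq> U" unfolding D_def U_def by auto
  have cI: "card (U - D) = n - card D"
    using DU U by (simp add: card_Diff_subset finite_subset)
  have finA: "finite A" using Am assms(3) unfolding small_sets_def base_def
    by (metis (no_types, lifting) DiffD1 Sup_upper finite_atLeastAtMost finite_subset mem_Collect_eq)
  have "card (U - D) \<le> card A" using sub I finA by (metis card_mono)
  moreover have "card U = n" using U by simp
  ultimately show False using s1 sA e1 e2 dD cI by linarith
qed

end
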